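(* Let $G:\Omega\to\Omega$ and $F:\Lambda\to\Lambda$ be as in the context. Given a $G$-invariant Borel probability $\mu$ on $\Omega$, there exists an $F^{-1}$-invariant Borel probability $\bar\mu$ on $\Lambda$ such that $h_{\bar\mu}(F^{-1})\ge h_\mu(G)$.
   Context: Horseshoe. $I=[0,1]$, $R_0=I\times I\times[0,1/6]$, $R_1=I\times I\times[5/6,1]$; constants $0<\lambda_0<1/3$, $\beta_0>6$, $0<\sigma_0<1/3$, $3<\beta_1<4$; $f$ the time-one map of $y'=(1-y)y$, i.e. $f^n(y)=\frac{1}{1-(1-\frac1y)e^{-n}}$, $f(0)=0$; $F(x,y,z)=(\lambda_0x,f(y),\beta_0z)$ on $R_0$, $F(x,y,z)=(\tfrac34-\lambda_0x,\sigma_0(1-y),\beta_1(z-\tfrac56))$ on $R_1$; $\Lambda=\bigcap_{n\in\mathbb{Z}}F^n(R_0\cup R_1)$, $F:\Lambda\to\Lambda$ a homeomorphism. The map $G$: $S_1=[0,\lambda_0]\times[0,1]\times\{0\}$, $S_2=[\tfrac34-\lambda_0,\tfrac34]\times[0,\sigma_0]\times\{0\}$, $S_3=[0,\lambda_0]\times[0,1]\times\{5/6\}$, $g_0=f^{-1}$, $g_1(y)=1-\sigma_0^{-1}y$, $a=\lambda_0^{-1}$; $G(x,y,z)=(ax,g_0(y),0)$ on $S_1\cup S_3$, $G(x,y,z)=(a(\tfrac34-x),g_1(y),\tfrac56)$ on $S_2$; $\Omega=\bigcap_{n\in\mathbb{N}}G^{-n}(S_1\cup S_2\cup S_3)$,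 $G:\Omega\to\Omega$. The projection $\pi:R_0\cup R_1\to\mathbb{R}^3$, $\pi(x,y,z)=(x,y,0)$ on $R_0$ and $(x,y,5/6)$ on $R_1$, is continuous, maps $\Lambda$ onto $\Omega$ and satisfies $\pi\circ F^{-1}=G\circ\pi$. *)

theory Defs
  imports "HOL-Probability.Probability"
begin

type_synonym pt = "real \<times> real \<times> real"

text \<open>Time-one map of y' = (1-y) y on [0,1], with f 0 = 0, and its inverse g0.\<close>
definition hf :: "real \<Rightarrow> real" where
  "hf y = (if y = 0 then 0 else 1 / (1 - (1 - 1 / y) * exp (-1)))"

definition hg0 :: "real \<Rightarrow> real" where
  "hg0 y = (if y = 0 then 0 else 1 / (1 - (1 - 1 / y) * exp 1))"

definition R0 :: "pt set" where "R0 = {0..1} \<times> {0..1} \<times> {0..1/6}"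
definition R1 :: "pt set" where "R1 = {0..1} \<times> {0..1} \<times> {5/6..1}"

text \<open>F is only meaningful on R0 \<union> R1; outside we set it to the identity (irrelevant).\<close>
definition hF :: "real \<Rightarrow> real \<Rightarrow> real \<Rightarrow> real \<Rightarrow> pt \<Rightarrow> pt" where
  "hF l0 b0 s0 b1 p = (case p of (x, y, z) \<Rightarrow>
     if p \<in> R0 then (l0 * x, hf y, b0 * z)
     else if p \<in> R1 then (3/4 - l0 * x, s0 * (1 - y), b1 * (z - 5/6))
     else p)"

text \<open>Lambda = intersection over n in Z of F^n(R0 \<union> R1): points having a full
  bi-infinite F-orbit inside R0 \<union> R1.\<close>
definition hLambda :: "real \<Rightarrow> real \<Rightarrow> real \<Rightarrow> real \<Rightarrow> pt set" where
  "hLambda l0 b0 s0 b1 = {p. \<exists>orb :: int \<Rightarrow> pt. orb 0 = p \<and> (\<forall>k. orb k \<in> R0 \<union> R1)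
       \<and> (\<forall>k. orb (k + 1) = hF l0 b0 s0 b1 (orb k))}"

text \<open>F^{-1} on Lambda (F restricted to Lambda is a bijection of Lambda).\<close>
definition hFinv :: "real \<Rightarrow> real \<Rightarrow> real \<Rightarrow> real \<Rightarrow> pt \<Rightarrow> pt" where
  "hFinv l0 b0 s0 b1 = inv_into (hLambda l0 b0 s0 b1) (hF l0 b0 s0 b1)"

definition S1 :: "real \<Rightarrow> pt set" where "S1 l0 = {0..l0} \<times> {0..1} \<times> {0}"
definition S2 :: "real \<Rightarrow> real \<Rightarrow> pt set" where "S2 l0 s0 = {3/4 - l0..3/4} \<times> {0..s0} \<times> {0}"
definition S3 :: "real \<Rightarrow> pt set" where "S3 l0 = {0..l0} \<times> {0..1} \<times> {5/6}"

definition hg1 :: "real \<Rightarrow> real \<Rightarrow> real" where "hg1 s0 y = 1 - y / s0"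

text \<open>G is only meaningful on S1 \<union> S2 \<union> S3; outside we set it to the identity.\<close>
definition hG :: "real \<Rightarrow> real \<Rightarrow> pt \<Rightarrow> pt" where
  "hG l0 s0 p = (case p of (x, y, z) \<Rightarrow>
     if p \<in> S1 l0 \<union> S3 l0 then (x / l0, hg0 y, 0)
     else if p \<in> S2 l0 s0 then ((3/4 - x) / l0, hg1 s0 y, 5/6)
     else p)"

definition hOmega :: "real \<Rightarrow> real \<Rightarrow> pt set" where
  "hOmega l0 s0 = {p. \<forall>n. (hG l0 s0 ^^ n) p \<in> S1 l0 \<union> S2 l0 s0 \<union> S3 l0}"

definition invariant_measure :: "'a measure \<Rightarrow> ('a \<Rightarrow> 'a) \<Rightarrow> bool" where
  "invariant_measure M T \<longleftrightarrow>
     (\<forall>A \<in> sets M. emeasure M (T -` A \<inter> space M) = emeasure M A)"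

definition fin_partitions :: "'a measure \<Rightarrow> 'a set set set" where
  "fin_partitions M = {P. finite P \<and> P \<subseteq> sets M \<and> {} \<notin> P \<and> \<Union>P = space M \<and> disjoint P}"

definition part_entropy :: "'a measure \<Rightarrow> 'a set set \<Rightarrow> real" where
  "part_entropy M P = - (\<Sum>A\<in>P. measure M A * ln (measure M A))"

definition join_iter :: "'a measure \<Rightarrow> ('a \<Rightarrow> 'a) \<Rightarrow> 'a set set \<Rightarrow> nat \<Rightarrow> 'a set set" where
  "join_iter M T P n =
     {space M \<inter> (\<Inter>i<n. (T ^^ i) -` a i) | a. \<forall>i<n. a i \<in> P} - {{}}"

definition ks_entropy_part :: "'a measure \<Rightarrow> ('a \<Rightarrow> 'a) \<Rightarrow> 'a set set \<Rightarrow> real" where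
  "ks_entropy_part M T P = lim (\<lambda>n. part_entropy M (join_iter M T P n) / real n)"

definition ks_entropy :: "'a measure \<Rightarrow> ('a \<Rightarrow> 'a) \<Rightarrow> ereal" where
  "ks_entropy M T = (SUP P \<in> fin_partitions M. ereal (ks_entropy_part M T P))"

end

theory Submission
  imports Defs
begin


lemma hf_range: assumes "0 \<le> y" "y \<le> 1" shows "0 \<le> hf y \<and> hf y \<le> 1"
proof (cases "y = 0")
  case False
  then have y: "0 < y" using assms by auto
  have "1 / y \<ge> 1" using y assms by (simp add: field_simps)
  then have d: "1 - (1 - 1/y) * exp (-1) \<ge> 1" by (simp add: mult_nonpos_nonneg)
  have "hf y = 1 / (1 - (1 - 1/y) * exp (-1))" using False unfolding hf_def by simp
  then show ?thesis using d by simp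
qed (simp add: hf_def)

lemma hg0_range: assumes "0 \<le> y" "y \<le> 1" shows "0 \<le> hg0 y \<and> hg0 y \<le> 1"
proof (cases "y = 0")
  case False
  then have y: "0 < y" using assms by auto
  have "1 / y \<ge> 1" using y assms by (simp add: field_simps)
  then have d: "1 - (1 - 1/y) * exp 1 \<ge> 1" by (simp add: mult_nonpos_nonneg)
  have "hg0 y = 1 / (1 - (1 - 1/y) * exp 1)" using False unfolding hg0_def by simp
  then show ?thesis using d by simp
qed (simp add: hg0_def)

lemma hg0_hf: assumes "0 \<le> y" "y \<le> 1" shows "hg0 (hf y) = y"
proof (cases "y = 0")
  case False
  then have y: "0 < y" using assms by auto
  have "1 / y \<ge> 1" using y assms by (simp add: field_simps)
  then have d: "1 - (1 - 1/y) * exp (-1) \<ge> 1" by (simp add: mult_nonpos_nonneg)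
  define u where "u = hf y"
  have u: "u = 1 / (1 - (1 - 1/y) * exp (-1))" using False unfolding u_def hf_def by simp
  have "u \<noteq> 0" using u d by simp
  have "1 / u = 1 - (1 - 1/y) * exp (-1)" using u d by simp
  then have e1: "1 - 1/u = (1 - 1/y) * exp (-1)" by simp
  have "(1 - 1/u) * exp 1 = (1 - 1/y) * (exp (-1) * exp 1)" unfolding e1 by simp
  also have "exp (-1) * exp 1 = (1::real)" by (simp add: exp_minus)
  finally have "(1 - 1/u) * exp 1 = 1 - 1/y" by simp
  then have "1 - (1 - 1/u) * exp 1 = 1 / y" by simp
  then show ?thesis using \<open>u \<noteq> 0\<close> y unfolding u_def[symmetric] hg0_def by simp
qed (simp add: hf_def hg0_def)

lemma hf_hg0: assumes "0 \<le> y" "y \<le> 1" shows "hf (hg0 y) = y"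
proof (cases "y = 0")
  case False
  then have y: "0 < y" using assms by auto
  have "1 / y \<ge> 1" using y assms by (simp add: field_simps)
  then have d: "1 - (1 - 1/y) * exp 1 \<ge> 1" by (simp add: mult_nonpos_nonneg)
  define u where "u = hg0 y"
  have u: "u = 1 / (1 - (1 - 1/y) * exp 1)" using False unfolding u_def hg0_def by simp
  have "u \<noteq> 0" using u d by simp
  have "1 / u = 1 - (1 - 1/y) * exp 1" using u d by simp
  then have e1: "1 - 1/u = (1 - 1/y) * exp 1" by simp
  have "(1 - 1/u) * exp (-1) = (1 - 1/y) * (exp 1 * exp (-1))" unfolding e1 by simp
  also have "exp 1 * exp (-1) = (1::real)" by (simp add: exp_minus)
  finally have "(1 - 1/u) * exp (-1) = 1 - 1/y" by simp
  then have "1 - (1 - 1/u) * exp (-1) = 1 / y" by simp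
  then show ?thesis using \<open>u \<noteq> 0\<close> y unfolding u_def[symmetric] hf_def by simp
qed (simp add: hf_def hg0_def)



lemma funpow_meas': "T \<in> measurable M M \<Longrightarrow> T ^^ n \<in> measurable M M"
proof (induction n)
  case 0 then show ?case by (simp add: id_def)
next
  case (Suc n)
  then have "T \<circ> T ^^ n \<in> measurable M M" by (intro measurable_comp[where N=M]) auto
  then show ?case by (simp add: comp_def)
qed

lemma factor_entropy:
  fixes M :: "'a measure" and N :: "'b measure"
  assumes surj: "pr ` space N = space M"
    and prm: "pr \<in> measurable N M"
    and Sinv: "\<And>p. p \<in> space N \<Longrightarrow> S p \<in> space N"
    and comm: "\<And>p. p \<in> space N \<Longrightarrow> pr (S p) = T (pr p)"
    and meq: "\<And>A. A \<in> sets M \<Longrightarrow> measure N (pr -` A \<inter> space N) = measure M A"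
    and Tm: "T \<in> measurable M M"
  shows "ks_entropy M T \<le> ks_entropy N S"
proof -
  define \<Phi> where "\<Phi> A = pr -` A \<inter> space N" for A
  have Sn: "(S ^^ i) p \<in> space N" if "p \<in> space N" for i p
    using that by (induction i) (auto intro: Sinv)
  have commn: "pr ((S ^^ i) p) = (T ^^ i) (pr p)" if "p \<in> space N" for i p
    using that by (induction i) (auto simp: comm Sn)
  have prsp: "pr p \<in> space M" if "p \<in> space N" for p
  proof -
    have "pr p \<in> pr ` space N" using that by (rule imageI)
    then show ?thesis unfolding surj .
  qed
  have surjE: "\<exists>p\<in>space N. x = pr p" if "x \<in> space M" for x
  proof -
    have "x \<in> pr ` space N" using that unfolding surj .
    then show ?thesis by (rule imageE) blast
  qed
  have Phi_empty: "\<Phi> B = {} \<longleftrightarrow> B = {}" if Bs: "B \<subseteq> space M" for B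
  proof
    assume e: "\<Phi> B = {}"
    show "B = {}"
    proof (rule ccontr)
      assume "B \<noteq> {}"
      then obtain x where x: "x \<in> B" by blast
      then obtain p where "p \<in> space N" "x = pr p" using surjE Bs by blast
      then have "p \<in> \<Phi> B" using x unfolding \<Phi>_def by simp
      then show False using e by simp
    qed
  qed (simp add: \<Phi>_def)
  have inj: "inj_on \<Phi> (Pow (space M))"
  proof (rule inj_onI)
    fix A B assume "A \<in> Pow (space M)" "B \<in> Pow (space M)" "\<Phi> A = \<Phi> B"
    note h = this
    have "A \<subseteq> B \<and> B \<subseteq> A"
    proof (intro conjI subsetI)
      fix x assume "x \<in> A"
      then obtain p where p: "p \<in> space N" "x = pr p" using h(1) surjE by blast
      then have "p \<in> \<Phi> A" using \<open>x \<in> A\<close> unfolding \<Phi>_def by auto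
      then show "x \<in> B" using h(3) p unfolding \<Phi>_def by auto
    next
      fix x assume "x \<in> B"
      then obtain p where p: "p \<in> space N" "x = pr p" using h(2) surjE by blast
      then have "p \<in> \<Phi> B" using \<open>x \<in> B\<close> unfolding \<Phi>_def by auto
      then show "x \<in> A" using h(3) p unfolding \<Phi>_def by auto
    qed
    then show "A = B" by blast
  qed
  have Tmn: "T ^^ i \<in> measurable M M" for i by (rule funpow_meas'[OF Tm])
  have main: "ereal (ks_entropy_part M T P) \<le> ks_entropy N S" if P: "P \<in> fin_partitions M" for P
  proof -
    have Pf: "finite P" "P \<subseteq> sets M" "{} \<notin> P" "\<Union>P = space M" "disjoint P"
      using P unfolding fin_partitions_def by auto
    have Psub: "A \<subseteq> space M" if "A \<in> P" for A using that Pf(4) by blast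
    have Q: "\<Phi> ` P \<in> fin_partitions N"
      unfolding fin_partitions_def
    proof (intro CollectI conjI)
      show "finite (\<Phi> ` P)" using Pf by simp
      show "\<Phi> ` P \<subseteq> sets N" using Pf(2) prm unfolding \<Phi>_def by (auto intro: measurable_sets)
      show "{} \<notin> \<Phi> ` P" using Pf(3) Phi_empty Psub by auto
      show "\<Union> (\<Phi> ` P) = space N" using Pf(4) prsp unfolding \<Phi>_def by blast
      show "disjoint (\<Phi> ` P)" using Pf(5) unfolding \<Phi>_def disjoint_def by blast
    qed
    have join_eq: "join_iter N S (\<Phi> ` P) n = \<Phi> ` join_iter M T P n" for n
    proof -
      have cell: "space N \<inter> (\<Inter>i<n. (S ^^ i) -` \<Phi> (a i)) = \<Phi> (space M \<inter> (\<Inter>i<n. (T ^^ i) -` a i))" for a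
        unfolding \<Phi>_def using Sn commn prsp by auto
      have jeq: "{space N \<inter> (\<Inter>i<n. (S ^^ i) -` b i) | b. \<forall>i<n. b i \<in> \<Phi> ` P}
          = \<Phi> ` {space M \<inter> (\<Inter>i<n. (T ^^ i) -` a i) | a. \<forall>i<n. a i \<in> P}"
      proof (rule set_eqI iffI)+
        fix c assume "c \<in> {space N \<inter> (\<Inter>i<n. (S ^^ i) -` b i) | b. \<forall>i<n. b i \<in> \<Phi> ` P}"
        then obtain b where c: "c = space N \<inter> (\<Inter>i<n. (S ^^ i) -` b i)" and b: "\<forall>i<n. b i \<in> \<Phi> ` P" by blast
        then have "\<forall>i. \<exists>a. i < n \<longrightarrow> a \<in> P \<and> b i = \<Phi> a" by blast
        then obtain a where a: "\<And>i. i < n \<Longrightarrow> a i \<in> P \<and> b i = \<Phi> (a i)" by metis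
        have "c = space N \<inter> (\<Inter>i<n. (S ^^ i) -` \<Phi> (a i))"
          unfolding c using a by (intro arg_cong2[where f="(\<inter>)"] refl INF_cong) auto
        also have "\<dots> = \<Phi> (space M \<inter> (\<Inter>i<n. (T ^^ i) -` a i))" by (rule cell)
        finally have "c = \<Phi> (space M \<inter> (\<Inter>i<n. (T ^^ i) -` a i))" .
        moreover have "space M \<inter> (\<Inter>i<n. (T ^^ i) -` a i) \<in> {space M \<inter> (\<Inter>i<n. (T ^^ i) -` a i) | a. \<forall>i<n. a i \<in> P}"
          using a by blast
        ultimately show "c \<in> \<Phi> ` {space M \<inter> (\<Inter>i<n. (T ^^ i) -` a i) | a. \<forall>i<n. a i \<in> P}"
          by (rule image_eqI)
      next
        fix c assume "c \<in> \<Phi> ` {space M \<inter> (\<Inter>i<n. (T ^^ i) -` a i) | a. \<forall>i<n. a i \<in> P}"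
        then obtain B where cB: "c = \<Phi> B" and B: "B \<in> {space M \<inter> (\<Inter>i<n. (T ^^ i) -` a i) | a. \<forall>i<n. a i \<in> P}"
          by (rule imageE)
        from B obtain a where Ba: "B = space M \<inter> (\<Inter>i<n. (T ^^ i) -` a i)" and a: "\<forall>i<n. a i \<in> P"
          unfolding mem_Collect_eq by (elim exE conjE)
        have "c = space N \<inter> (\<Inter>i<n. (S ^^ i) -` (\<lambda>i. \<Phi> (a i)) i)" unfolding cB Ba cell by simp
        moreover have "\<forall>i<n. (\<lambda>i. \<Phi> (a i)) i \<in> \<Phi> ` P" using a by simp
        ultimately show "c \<in> {space N \<inter> (\<Inter>i<n. (S ^^ i) -` b i) | b. \<forall>i<n. b i \<in> \<Phi> ` P}"
          unfolding mem_Collect_eq by (intro exI[of _ "\<lambda>i. \<Phi> (a i)"] conjI)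
      qed
      have dif: "\<Phi> ` X - {{}} = \<Phi> ` (X - {{}})" if XS: "\<And>B. B \<in> X \<Longrightarrow> B \<subseteq> space M" for X
      proof (rule set_eqI iffI)+
        fix c assume "c \<in> \<Phi> ` X - {{}}"
        then obtain B where "B \<in> X" "c = \<Phi> B" "\<Phi> B \<noteq> {}" by blast
        then have "B \<noteq> {}" using Phi_empty[OF XS] by blast
        then show "c \<in> \<Phi> ` (X - {{}})" using \<open>B \<in> X\<close> \<open>c = \<Phi> B\<close> by blast
      next
        fix c assume "c \<in> \<Phi> ` (X - {{}})"
        then obtain B where "B \<in> X" "c = \<Phi> B" "B \<noteq> {}" by blast
        then have "\<Phi> B \<noteq> {}" using Phi_empty[OF XS] by blast
        then show "c \<in> \<Phi> ` X - {{}}" using \<open>B \<in> X\<close> \<open>c = \<Phi> B\<close> by blast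
      qed
      have sub: "\<And>B. B \<in> {space M \<inter> (\<Inter>i<n. (T ^^ i) -` a i) | a. \<forall>i<n. a i \<in> P} \<Longrightarrow> B \<subseteq> space M"
        by blast
      show ?thesis unfolding join_iter_def jeq by (rule dif[OF sub])
    qed
    have join_sub: "B \<subseteq> space M" "B \<in> sets M" if "B \<in> join_iter M T P n" for B n
    proof -
      from that obtain a where B: "B = space M \<inter> (\<Inter>i<n. (T ^^ i) -` a i)" and a: "\<forall>i<n. a i \<in> P"
        unfolding join_iter_def by blast
      show "B \<subseteq> space M" using B by auto
      have "B = space M \<inter> (\<Inter>i<n. (T ^^ i) -` a i \<inter> space M)" using B by auto
      also have "\<dots> \<in> sets M"
      proof (cases "n = 0")
        case True then show ?thesis by simp
      next
        case False
        then show ?thesis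
          using a Pf(2) by (intro sets.Int sets.top sets.countable_INT') (auto intro: measurable_sets[OF Tmn])
      qed
      finally show "B \<in> sets M" .
    qed
    have pe: "part_entropy N (join_iter N S (\<Phi> ` P) n) = part_entropy M (join_iter M T P n)" for n
    proof -
      have "join_iter M T P n \<subseteq> Pow (space M)" using join_sub by blast
      then have ij: "inj_on \<Phi> (join_iter M T P n)" using inj_on_subset[OF inj] by blast
      have "(\<Sum>A\<in>\<Phi> ` join_iter M T P n. measure N A * ln (measure N A))
          = (\<Sum>A\<in>join_iter M T P n. measure N (\<Phi> A) * ln (measure N (\<Phi> A)))"
        by (simp add: sum.reindex[OF ij])
      also have "\<dots> = (\<Sum>A\<in>join_iter M T P n. measure M A * ln (measure M A))"
        by (rule sum.cong) (simp_all add: \<Phi>_def meq join_sub)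
      finally show ?thesis unfolding join_eq part_entropy_def by simp
    qed
    have "ks_entropy_part M T P = ks_entropy_part N S (\<Phi> ` P)"
      unfolding ks_entropy_part_def pe ..
    also have "ereal \<dots> \<le> ks_entropy N S"
      unfolding ks_entropy_def using Q by (intro SUP_upper) auto
    finally show ?thesis by simp
  qed
  show ?thesis unfolding ks_entropy_def[of M] by (rule SUP_least) (rule main)
qed



locale hs =
  fixes l0 b0 s0 b1 :: real
  assumes l0: "0 < l0" "l0 < 1/3" and b0: "b0 > 6" and s0: "0 < s0" "s0 < 1/3"
    and b1: "3 < b1" "b1 < 4"
begin

abbreviation "G \<equiv> hG l0 s0"
abbreviation "Om \<equiv> hOmega l0 s0"
abbreviation "F \<equiv> hF l0 b0 s0 b1"
abbreviation "Lam \<equiv> hLambda l0 b0 s0 b1"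
abbreviation "Finv \<equiv> hFinv l0 b0 s0 b1"
abbreviation "SS \<equiv> S1 l0 \<union> S2 l0 s0 \<union> S3 l0"

definition pr :: "pt \<Rightarrow> pt" where
  "pr p = (fst p, fst (snd p), if p \<in> R0 then 0 else 5/6)"

definition Pre :: "pt \<Rightarrow> pt" where
  "Pre q = (if snd (snd q) = 5/6 then (3/4 - l0 * fst q, s0 * (1 - fst (snd q)), 0)
            else (l0 * fst q, hf (fst (snd q)), 0))"

lemma G_S13: assumes "(x,y,z) \<in> S1 l0 \<union> S3 l0" shows "G (x,y,z) = (x / l0, hg0 y, 0)"
  using assms unfolding hG_def by simp

lemma S2_not13: assumes "(x,y,z) \<in> S2 l0 s0" shows "(x,y,z) \<notin> S1 l0 \<union> S3 l0"
  using assms l0 unfolding S1_def S2_def S3_def by auto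

lemma G_S2: assumes "(x,y,z) \<in> S2 l0 s0" shows "G (x,y,z) = ((3/4 - x) / l0, 1 - y / s0, 5/6)"
  using assms S2_not13[OF assms] unfolding hG_def hg1_def by simp

lemma Om_S: "p \<in> Om \<Longrightarrow> p \<in> SS"
  unfolding hOmega_def by (metis (no_types, lifting) mem_Collect_eq funpow_0)

lemma Om_G: assumes "p \<in> Om" shows "G p \<in> Om"
  unfolding hOmega_def
proof (intro CollectI allI)
  fix n
  have "(G ^^ Suc n) p \<in> SS" using assms unfolding hOmega_def by blast
  then show "(G ^^ n) (G p) \<in> SS" by (simp only: funpow_Suc_right comp_def)
qed

lemma Om_Gn: "p \<in> Om \<Longrightarrow> (G ^^ n) p \<in> Om"
  by (induction n) (auto intro: Om_G)

lemma Pre_S: assumes "q \<in> SS" shows "Pre q \<in> SS \<and> G (Pre q) = q"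
proof -
  obtain x y z where q: "q = (x,y,z)" by (cases q) auto
  show ?thesis
  proof (cases "z = 5/6")
    case True
    then have h: "0 \<le> x" "x \<le> l0" "0 \<le> y" "y \<le> 1" using assms l0 unfolding q S1_def S2_def S3_def by auto
    have "l0 * x \<le> l0 * 1" using h l0 by (intro mult_left_mono) auto
    moreover have "0 \<le> l0 * x" using h l0 by simp
    moreover have "s0 * (1 - y) \<le> s0 * 1" "0 \<le> s0 * (1 - y)" using h s0 by (intro mult_left_mono, auto)
    ultimately have P2: "(3/4 - l0 * x, s0 * (1 - y), 0::real) \<in> S2 l0 s0"
      unfolding S2_def by auto
    have "Pre q = (3/4 - l0 * x, s0 * (1 - y), 0)" unfolding Pre_def q using True by simp
    moreover have "G (3/4 - l0 * x, s0 * (1 - y), 0) = (x, y, 5/6)"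
      using G_S2[OF P2] l0 s0 by simp
    ultimately show ?thesis using P2 q True by simp
  next
    case False
    then have h: "0 \<le> x" "x \<le> 3/4" "0 \<le> y" "y \<le> 1" "z = 0" using assms l0 s0 unfolding q S1_def S2_def S3_def by auto
    have "l0 * x \<le> l0 * 1" using h l0 by (intro mult_left_mono) auto
    moreover have "0 \<le> l0 * x" using h l0 by simp
    ultimately have P1: "(l0 * x, hf y, 0::real) \<in> S1 l0"
      unfolding S1_def using hf_range[of y] h by auto
    have "Pre q = (l0 * x, hf y, 0)" unfolding Pre_def q using False by simp
    moreover have "G (l0 * x, hf y, 0) = (x, y, 0)"
      using G_S13[of "l0 * x" "hf y" 0] P1 l0 hg0_hf[of y] h by simp
    ultimately show ?thesis using P1 q h by simp
  qed
qed

lemma Pre_Om: assumes "q \<in> Om" shows "Pre q \<in> Om \<and> G (Pre q) = q"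
proof -
  have q: "q \<in> SS" using Om_S[OF assms] .
  have "(G ^^ n) (Pre q) \<in> SS" for n
  proof (cases n)
    case 0 then show ?thesis using Pre_S[OF q] by simp
  next
    case (Suc m)
    then have "(G ^^ n) (Pre q) = (G ^^ m) q" using Pre_S[OF q] by (simp add: funpow_Suc_right del: funpow.simps)
    then show ?thesis using assms unfolding hOmega_def by simp
  qed
  then show ?thesis using Pre_S[OF q] unfolding hOmega_def by simp
qed

lemma F_R0: assumes "(x,y,z) \<in> R0" shows "F (x,y,z) = (l0 * x, hf y, b0 * z)"
  using assms unfolding hF_def by simp

end

context hs begin
lemma R01_disj: "(x,y,z) \<in> R1 \<Longrightarrow> (x,y,z) \<notin> R0"
  unfolding R0_def R1_def by auto

lemma F_R1: assumes "(x,y,z) \<in> R1" shows "F (x,y,z) = (3/4 - l0 * x, s0 * (1 - y), b1 * (z - 5/6))"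
  using assms R01_disj[OF assms] unfolding hF_def by simp

lemma F_inj: "inj_on F (R0 \<union> R1)"
proof (rule inj_onI)
  fix p q assume p: "p \<in> R0 \<union> R1" and q: "q \<in> R0 \<union> R1" and e: "F p = F q"
  obtain x y z where pp: "p = (x,y,z)" by (cases p) auto
  obtain x' y' z' where qq: "q = (x',y',z')" by (cases q) auto
  have hx: "0 \<le> x" "x \<le> 1" "0 \<le> y" "y \<le> 1" "0 \<le> x'" "x' \<le> 1" "0 \<le> y'" "y' \<le> 1"
    using p q unfolding pp qq R0_def R1_def by auto
  have lx: "l0 * x \<le> l0" "l0 * x' \<le> l0" using hx l0 by (simp_all add: mult_left_le)
  have Fp0: "F p = (l0 * x, hf y, b0 * z)" if "p \<in> R0" using F_R0[of x y z] that pp by simp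
  have Fq0: "F q = (l0 * x', hf y', b0 * z')" if "q \<in> R0" using F_R0[of x' y' z'] that qq by simp
  have Fp1: "F p = (3/4 - l0 * x, s0 * (1 - y), b1 * (z - 5/6))" if "p \<in> R1" using F_R1[of x y z] that pp by simp
  have Fq1: "F q = (3/4 - l0 * x', s0 * (1 - y'), b1 * (z' - 5/6))" if "q \<in> R1" using F_R1[of x' y' z'] that qq by simp
  show "p = q"
  proof (cases "p \<in> R0")
    case pR0: True
    show ?thesis
    proof (cases "q \<in> R0")
      case True
      have "l0 * x = l0 * x'" "hf y = hf y'" "b0 * z = b0 * z'"
        using e unfolding Fp0[OF pR0] Fq0[OF True] by simp_all
      then have "x = x'" "hg0 (hf y) = hg0 (hf y')" "z = z'" using l0 b0 by simp_all
      then have "x = x'" "y = y'" "z = z'" using hg0_hf[of y] hg0_hf[of y'] hx by simp_all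
      then show ?thesis using pp qq by simp
    next
      case False
      then have "q \<in> R1" using q by auto
      then have "l0 * x = 3/4 - l0 * x'"
        using e unfolding Fp0[OF pR0] Fq1[OF \<open>q \<in> R1\<close>] by simp
      then have False using lx l0 by linarith
      then show ?thesis ..
    qed
  next
    case False
    then have p1: "p \<in> R1" using p by auto
    show ?thesis
    proof (cases "q \<in> R0")
      case True
      then have "3/4 - l0 * x = l0 * x'"
        using e unfolding Fq0[OF True] Fp1[OF p1] by simp
      then have False using lx l0 by linarith
      then show ?thesis ..
    next
      case False
      then have "q \<in> R1" using q by auto
      then have "3/4 - l0 * x = 3/4 - l0 * x'" "s0 * (1 - y) = s0 * (1 - y')" "b1 * (z - 5/6) = b1 * (z' - 5/6)"
        using e unfolding Fp1[OF p1] Fq1[OF \<open>q \<in> R1\<close>] by simp_all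
      then have "x = x'" "y = y'" "z = z'" using l0 s0 b1 by auto
      then show ?thesis using pp qq by simp
    qed
  qed
qed

end

context hs begin
lemma Lam_R: "p \<in> Lam \<Longrightarrow> p \<in> R0 \<union> R1"
  unfolding hLambda_def by auto

lemma Lam_sub: "Lam \<subseteq> R0 \<union> R1" using Lam_R by blast

lemma Lam_prev: assumes "p \<in> Lam" shows "\<exists>q\<in>Lam. F q = p"
proof -
  obtain orb :: "int \<Rightarrow> pt" where o: "orb 0 = p" "\<forall>k. orb k \<in> R0 \<union> R1" "\<forall>k. orb (k + 1) = F (orb k)"
    using assms unfolding hLambda_def by blast
  have "orb (-1) \<in> Lam"
    unfolding hLambda_def
  proof (rule CollectI, rule exI[of _ "\<lambda>k. orb (k - 1)"], intro conjI allI)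
    fix k :: int
    show "orb (k - 1) \<in> R0 \<union> R1" using o(2) by blast
    show "orb (k + 1 - 1) = F (orb (k - 1))" using o(3)[rule_format, of "k - 1"] by simp
  qed simp
  moreover have "F (orb (-1)) = p" using o(3)[rule_format, of "-1"] o(1) by simp
  ultimately show ?thesis by blast
qed

lemma Finv_Lam: assumes "p \<in> Lam" shows "Finv p \<in> Lam \<and> F (Finv p) = p"
proof -
  have "p \<in> F ` Lam" using Lam_prev[OF assms] by auto
  then show ?thesis unfolding hFinv_def by (simp add: inv_into_into f_inv_into_f)
qed

lemma Finv_F: assumes "q \<in> Lam" shows "Finv (F q) = q"
  unfolding hFinv_def using inj_on_subset[OF F_inj Lam_sub] assms by (simp add: inv_into_f_f)

lemma pr_step: assumes "p \<in> Lam" shows "pr p \<in> SS \<and> pr (Finv p) = G (pr p)"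
proof -
  define q where "q = Finv p"
  have qL: "q \<in> Lam" and Fq: "F q = p" using Finv_Lam[OF assms] q_def by auto
  obtain x y z where qq: "q = (x,y,z)" by (cases q) auto
  have pR: "p \<in> R0 \<union> R1" using Lam_R[OF assms] .
  have qR: "q \<in> R0 \<union> R1" using Lam_R[OF qL] .
  have hx: "0 \<le> x" "x \<le> 1" "0 \<le> y" "y \<le> 1" using qR unfolding qq R0_def R1_def by auto
  have lx: "l0 * x \<le> l0" "0 \<le> l0 * x" using hx l0 by (simp_all add: mult_left_le)
  show ?thesis
  proof (cases "q \<in> R0")
    case True
    then have p: "p = (l0 * x, hf y, b0 * z)" using Fq F_R0 qq by simp
    have prp: "pr p = (l0 * x, hf y, if p \<in> R0 then 0 else 5/6)" unfolding pr_def p by simp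
    have "pr p \<in> S1 l0 \<union> S3 l0"
    proof (cases "p \<in> R0")
      case True then show ?thesis unfolding prp S1_def using lx hf_range[of y] hx by simp
    next
      case False then show ?thesis unfolding prp S3_def using lx hf_range[of y] hx by simp
    qed
    moreover then have "G (pr p) = (x, y, 0)"
      unfolding prp using G_S13[of "l0 * x" "hf y" "if p \<in> R0 then 0 else 5/6"] l0 hg0_hf[of y] hx by simp
    moreover have "pr q = (x, y, 0)" using True qq pr_def by simp
    ultimately show ?thesis using q_def by auto
  next
    case False
    then have q1: "q \<in> R1" using qR by auto
    then have p: "p = (3/4 - l0 * x, s0 * (1 - y), b1 * (z - 5/6))" using Fq F_R1 qq by simp
    have zz: "5/6 \<le> z" "z \<le> 1" using q1 unfolding qq R1_def by auto
    have "b1 * (z - 5/6) \<le> 4 * (1/6)" using zz b1 by (intro mult_mono) auto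
    then have "p \<notin> R1" unfolding p R1_def by auto
    then have pR0: "p \<in> R0" using pR by auto
    have sy: "s0 * (1 - y) \<le> s0 * 1" "0 \<le> s0 * (1 - y)" using hx s0 by (intro mult_left_mono, auto)
    have ps: "pr p = (3/4 - l0 * x, s0 * (1 - y), 0)" unfolding pr_def using pR0 p by simp
    have ps2: "pr p \<in> S2 l0 s0" unfolding ps S2_def using lx sy by auto
    moreover have "G (pr p) = (x, y, 5/6)"
      unfolding ps using G_S2[of "3/4 - l0 * x" "s0 * (1 - y)" 0] ps2 ps l0 s0 by simp
    moreover have "pr q = (x, y, 5/6)" using False qq pr_def by simp
    ultimately show ?thesis using q_def by auto
  qed
qed

lemma Finvn: assumes "p \<in> Lam" shows "(Finv ^^ n) p \<in> Lam \<and> pr ((Finv ^^ n) p) = (G ^^ n) (pr p)"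
proof (induction n)
  case (Suc n)
  have "(Finv ^^ Suc n) p = Finv ((Finv ^^ n) p)" by simp
  then show ?case using Suc Finv_Lam pr_step by (metis funpow.simps(2) comp_apply)
qed (use assms in simp)

lemma pr_Om: assumes "p \<in> Lam" shows "pr p \<in> Om"
  unfolding hOmega_def
proof (intro CollectI allI)
  fix n
  have "(G ^^ n) (pr p) = pr ((Finv ^^ n) p)" "(Finv ^^ n) p \<in> Lam" using Finvn[OF assms] by auto
  then show "(G ^^ n) (pr p) \<in> SS" using pr_step by simp
qed

end

context hs begin

definition lab :: "pt \<Rightarrow> bool" where "lab p \<longleftrightarrow> snd (snd p) = 5/6"
definition cc :: "pt \<Rightarrow> real" where "cc p = (if lab p then 5/6 else 0)"
definition rr :: "pt \<Rightarrow> real" where "rr p = (if lab p then 1/b1 else 1/b0)"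
definition trm :: "(nat \<Rightarrow> pt) \<Rightarrow> nat \<Rightarrow> real" where
  "trm \<omega> n = cc (\<omega> n) * (\<Prod>k<n. rr (\<omega> k))"
definition Zs :: "(nat \<Rightarrow> pt) \<Rightarrow> real" where "Zs \<omega> = suminf (trm \<omega>)"
definition Psi0 :: "(nat \<Rightarrow> pt) \<Rightarrow> pt" where
  "Psi0 \<omega> = (fst (\<omega> 0), fst (snd (\<omega> 0)), Zs \<omega>)"
definition Xs :: "(nat \<Rightarrow> pt) set" where
  "Xs = {\<omega>. \<forall>n. \<omega> n \<in> Om \<and> G (\<omega> (Suc n)) = \<omega> n}"
definition sig :: "(nat \<Rightarrow> pt) \<Rightarrow> nat \<Rightarrow> pt" where
  "sig \<omega> = case_nat (G (\<omega> 0)) \<omega>"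
definition shft :: "(nat \<Rightarrow> pt) \<Rightarrow> nat \<Rightarrow> pt" where
  "shft \<omega> = (\<lambda>n. \<omega> (Suc n))"

lemma rr_bnd: "0 < rr p" "rr p \<le> 1/3"
  unfolding rr_def using b0 b1 by auto

lemma cc_bnd: "0 \<le> cc p" "cc p \<le> 5/6"
  unfolding cc_def by auto

lemma prod_rr: "0 \<le> (\<Prod>k<n. rr (\<omega> k))" "(\<Prod>k<n. rr (\<omega> k)) \<le> (1/3) ^ n"
proof -
  show "0 \<le> (\<Prod>k<n. rr (\<omega> k))" by (intro prod_nonneg less_imp_le rr_bnd(1))
  have "(\<Prod>k<n. rr (\<omega> k)) \<le> (\<Prod>k<n. (1/3::real))"
    by (intro prod_mono conjI less_imp_le[OF rr_bnd(1)] rr_bnd(2))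
  then show "(\<Prod>k<n. rr (\<omega> k)) \<le> (1/3) ^ n" by simp
qed

lemma trm_bnd: "0 \<le> trm \<omega> n" "trm \<omega> n \<le> 5/6 * (1/3) ^ n"
proof -
  show "0 \<le> trm \<omega> n" unfolding trm_def using cc_bnd prod_rr by simp
  show "trm \<omega> n \<le> 5/6 * (1/3) ^ n" unfolding trm_def
    using cc_bnd prod_rr by (intro mult_mono) auto
qed

lemma geo: "summable (\<lambda>n. 5/6 * (1/3::real) ^ n)" "(\<Sum>n. 5/6 * (1/3::real) ^ n) = 5/4"
proof -
  have s: "summable (\<lambda>n. (1/3::real) ^ n)" by (rule summable_geometric) simp
  then show "summable (\<lambda>n. 5/6 * (1/3::real) ^ n)" by (rule summable_mult)
  have "(\<Sum>n. 5/6 * (1/3::real) ^ n) = 5/6 * (\<Sum>n. (1/3::real) ^ n)"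
    using s by (rule suminf_mult)
  also have "(\<Sum>n. (1/3::real) ^ n) = 3/2" using suminf_geometric[of "1/3::real"] by simp
  finally show "(\<Sum>n. 5/6 * (1/3::real) ^ n) = 5/4" by simp
qed

lemma trm_summable: "summable (trm \<omega>)"
  by (rule summable_comparison_test'[OF geo(1), of 0]) (use trm_bnd in auto)

lemma Zs_bnd: "0 \<le> Zs \<omega>" "Zs \<omega> \<le> 5/4"
proof -
  show "0 \<le> Zs \<omega>" unfolding Zs_def using trm_summable trm_bnd by (intro suminf_nonneg) auto
  have "Zs \<omega> \<le> (\<Sum>n. 5/6 * (1/3::real) ^ n)" unfolding Zs_def
    using trm_summable geo(1) trm_bnd by (intro suminf_le) auto
  then show "Zs \<omega> \<le> 5/4" using geo(2) by simp
qed

lemma Zs_rec: "Zs \<omega> = cc (\<omega> 0) + rr (\<omega> 0) * Zs (shft \<omega>)"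
proof -
  have "trm \<omega> (Suc n) = rr (\<omega> 0) * trm (shft \<omega>) n" for n
    unfolding trm_def shft_def prod.lessThan_Suc_shift by (simp add: algebra_simps)
  then have "(\<lambda>n. trm \<omega> (Suc n)) = (\<lambda>n. rr (\<omega> 0) * trm (shft \<omega>) n)" by auto
  moreover have "(\<Sum>n. rr (\<omega> 0) * trm (shft \<omega>) n) = rr (\<omega> 0) * Zs (shft \<omega>)"
    unfolding Zs_def using trm_summable by (rule suminf_mult)
  moreover have "(\<Sum>n. trm \<omega> (Suc n)) = Zs \<omega> - trm \<omega> 0"
    unfolding Zs_def using trm_summable by (rule suminf_split_head)
  moreover have "trm \<omega> 0 = cc (\<omega> 0)" unfolding trm_def by simp
  ultimately show ?thesis by simp
qed

lemma Xs_shft: "\<omega> \<in> Xs \<Longrightarrow> shft \<omega> \<in> Xs"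
  unfolding Xs_def shft_def by auto

lemma Xs_sig: assumes "\<omega> \<in> Xs" shows "sig \<omega> \<in> Xs"
proof -
  have o: "\<omega> n \<in> Om" "G (\<omega> (Suc n)) = \<omega> n" for n using assms unfolding Xs_def by auto
  have "sig \<omega> n \<in> Om" for n by (cases n) (auto simp: sig_def o Om_G)
  moreover have "G (sig \<omega> (Suc n)) = sig \<omega> n" for n by (cases n) (auto simp: sig_def o)
  ultimately show ?thesis unfolding Xs_def by auto
qed

lemma shft_sig: "shft (sig \<omega>) = \<omega>"
  unfolding shft_def sig_def by simp

lemma sig_0: "sig \<omega> 0 = G (\<omega> 0)" unfolding sig_def by simp

lemma Om_z: assumes "p \<in> Om" shows "lab p \<longleftrightarrow> p \<in> S3 l0" "\<not> lab p \<longleftrightarrow> p \<in> S1 l0 \<union> S2 l0 s0"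
  using Om_S[OF assms] unfolding lab_def S1_def S2_def S3_def by auto

lemma Zs_nl: assumes "\<not> lab (\<eta> 0)" shows "Zs \<eta> = (1/b0) * Zs (shft \<eta>)"
  using Zs_rec[of \<eta>] assms unfolding cc_def rr_def by simp

lemma Zs_nl5: assumes "\<not> lab (\<eta> 0)" shows "Zs \<eta> \<le> 5/24"
proof -
  have "Zs \<eta> = (1/b0) * Zs (shft \<eta>)" by (rule Zs_nl[of \<eta>, OF assms])
  also have "\<dots> \<le> (1/6) * (5/4)" using Zs_bnd[of "shft \<eta>"] b0
    by (intro mult_mono) (auto simp: field_simps)
  finally show ?thesis by simp
qed

lemma Zs_le1: assumes "\<eta> \<in> Xs" shows "Zs \<eta> \<le> 1"
proof -
  have o: "\<eta> n \<in> Om" "G (\<eta> (Suc n)) = \<eta> n" for n using assms unfolding Xs_def by auto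
  show "Zs \<eta> \<le> 1"
  proof (cases "lab (\<eta> 0)")
    case False then show ?thesis using Zs_nl5[of \<eta>] by simp
  next
    case True
    obtain x y z where e1: "\<eta> 1 = (x,y,z)" by (cases "\<eta> 1") auto
    have "\<eta> 1 \<in> SS" using Om_S[OF o(1)] by simp
    have "\<eta> 1 \<notin> S1 l0 \<union> S3 l0"
    proof
      assume "\<eta> 1 \<in> S1 l0 \<union> S3 l0"
      then have "G (\<eta> 1) = (x / l0, hg0 y, 0)" using G_S13 e1 by simp
      then show False using o(2)[of 0] True unfolding lab_def by simp
    qed
    then have "\<eta> 1 \<in> S2 l0 s0" using \<open>\<eta> 1 \<in> SS\<close> by blast
    then have "\<not> lab (shft \<eta> 0)" unfolding shft_def lab_def S2_def by auto
    then have z1: "Zs (shft \<eta>) \<le> 5/24" using Zs_nl5 by blast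
    have "Zs \<eta> = 5/6 + (1/b1) * Zs (shft \<eta>)" using Zs_rec[of \<eta>] True unfolding cc_def rr_def by simp
    also have "\<dots> \<le> 5/6 + (1/3) * (5/24)" using z1 Zs_bnd[of "shft \<eta>"] b1
      by (intro add_left_mono mult_mono) (auto simp: field_simps)
    finally show ?thesis by simp
  qed
qed

lemma Zs_le6: assumes "\<eta> \<in> Xs" "\<not> lab (\<eta> 0)" shows "Zs \<eta> \<le> 1/6"
proof -
  have "Zs \<eta> = (1/b0) * Zs (shft \<eta>)" by (rule Zs_nl[of \<eta>, OF assms(2)])
  also have "\<dots> \<le> (1/6) * 1" using Zs_bnd[of "shft \<eta>"] Zs_le1[OF Xs_shft[OF assms(1)]] b0
    by (intro mult_mono) (auto simp: field_simps)
  finally show ?thesis by simp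
qed

lemma key: assumes "\<eta> \<in> Xs"
  shows "Psi0 \<eta> \<in> R0 \<union> R1 \<and> F (Psi0 \<eta>) = Psi0 (shft \<eta>) \<and> pr (Psi0 \<eta>) = \<eta> 0"
proof -
  have o: "\<eta> n \<in> Om" "G (\<eta> (Suc n)) = \<eta> n" for n using assms unfolding Xs_def by auto
  obtain x y z where e1: "\<eta> 1 = (x,y,z)" by (cases "\<eta> 1") auto
  have S: "\<eta> 1 \<in> SS" using Om_S[OF o(1)] by simp
  have sh: "shft \<eta> 0 = (x,y,z)" unfolding shft_def using e1 by simp
  define Z' where "Z' = Zs (shft \<eta>)"
  have Z': "0 \<le> Z'" "Z' \<le> 1" using Zs_bnd Zs_le1[OF Xs_shft[OF assms]] unfolding Z'_def by auto
  have Pshft: "Psi0 (shft \<eta>) = (x, y, Z')" unfolding Psi0_def Z'_def using sh by simp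
  show ?thesis
  proof (cases "\<eta> 1 \<in> S1 l0 \<union> S3 l0")
    case True
    have h: "0 \<le> x" "x \<le> l0" "0 \<le> y" "y \<le> 1" using True e1 unfolding S1_def S3_def by auto
    have e0: "\<eta> 0 = (x / l0, hg0 y, 0)" using o(2)[of 0] G_S13 True e1 by simp
    have nl: "\<not> lab (\<eta> 0)" using e0 unfolding lab_def by simp
    have Z: "Zs \<eta> = (1/b0) * Z'" using Zs_rec[of \<eta>] nl unfolding cc_def rr_def Z'_def by simp
    have P: "Psi0 \<eta> = (x / l0, hg0 y, (1/b0) * Z')" unfolding Psi0_def e0 Z by simp
    have xr: "0 \<le> x / l0" "x / l0 \<le> 1" using h l0 by (auto simp: field_simps)
    have zr: "0 \<le> (1/b0) * Z'" "(1/b0) * Z' \<le> 1/6"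
      using Zs_le6[OF assms nl] Z Z' b0 by auto
    have R: "Psi0 \<eta> \<in> R0" unfolding P R0_def using xr zr hg0_range[OF h(3,4)] by auto
    have "F (Psi0 \<eta>) = (l0 * (x / l0), hf (hg0 y), b0 * ((1/b0) * Z'))"
      unfolding P by (rule F_R0) (use R P in simp)
    also have "\<dots> = (x, y, Z')" using l0 b0 hf_hg0[OF h(3,4)] by simp
    finally have "F (Psi0 \<eta>) = Psi0 (shft \<eta>)" using Pshft by simp
    moreover have "pr (Psi0 \<eta>) = \<eta> 0" using R unfolding pr_def P e0 by simp
    ultimately show ?thesis using R by simp
  next
    case False
    then have S2: "\<eta> 1 \<in> S2 l0 s0" using S by blast
    have h: "3/4 - l0 \<le> x" "x \<le> 3/4" "0 \<le> y" "y \<le> s0" "z = 0" using S2 e1 unfolding S2_def by auto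
    have e0: "\<eta> 0 = ((3/4 - x) / l0, 1 - y / s0, 5/6)" using o(2)[of 0] G_S2 S2 e1 by simp
    have la: "lab (\<eta> 0)" using e0 unfolding lab_def by simp
    have nl1: "\<not> lab (shft \<eta> 0)" using sh h unfolding lab_def by simp
    have Z: "Zs \<eta> = 5/6 + (1/b1) * Z'" using Zs_rec[of \<eta>] la unfolding cc_def rr_def Z'_def by simp
    have Z'6: "Z' \<le> 1/6" using Zs_le6[OF Xs_shft[OF assms] nl1] unfolding Z'_def .
    have P: "Psi0 \<eta> = ((3/4 - x) / l0, 1 - y / s0, 5/6 + (1/b1) * Z')" unfolding Psi0_def e0 Z by simp
    have xr: "0 \<le> (3/4 - x) / l0" "(3/4 - x) / l0 \<le> 1" using h l0 by (auto simp: field_simps)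
    have yr: "0 \<le> 1 - y / s0" "1 - y / s0 \<le> 1" using h s0 by (auto simp: field_simps)
    have z18: "(1/b1) * Z' \<le> (1/3) * (1/6)" using Z' Z'6 b1 by (intro mult_mono) (auto simp: field_simps)
    have z0: "0 \<le> (1/b1) * Z'" using Z' b1 by simp
    have zr: "5/6 \<le> 5/6 + (1/b1) * Z'" "5/6 + (1/b1) * Z' \<le> 1"
      using z18 z0 by linarith+
    have R: "Psi0 \<eta> \<in> R1" unfolding P R1_def using xr yr zr by auto
    have "\<not> (5/6 + (1/b1) * Z' \<le> 1/6)" using zr by linarith
    then have nR0: "Psi0 \<eta> \<notin> R0" unfolding P R0_def by (simp only: mem_Times_iff fst_conv snd_conv atLeastAtMost_iff) simp
    have "F (Psi0 \<eta>) = (3/4 - l0 * ((3/4 - x) / l0), s0 * (1 - (1 - y / s0)), b1 * (5/6 + (1/b1) * Z' - 5/6))"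
      unfolding P by (rule F_R1) (use R P in simp)
    also have "\<dots> = (x, y, Z')" using l0 s0 b1 by simp
    finally have "F (Psi0 \<eta>) = Psi0 (shft \<eta>)" using Pshft by simp
    moreover have "pr (Psi0 \<eta>) = \<eta> 0" using nR0 unfolding pr_def P e0 by simp
    ultimately show ?thesis using R by simp
  qed
qed

end

context hs begin

lemma Psi0_Lam: assumes "\<omega> \<in> Xs" shows "Psi0 \<omega> \<in> Lam"
proof -
  have o: "\<omega> n \<in> Om" "G (\<omega> (Suc n)) = \<omega> n" for n using assms unfolding Xs_def by auto
  define W where "W j = (if 0 \<le> j then \<omega> (nat j) else (G ^^ nat (-j)) (\<omega> 0))" for j :: int
  define V where "V j = (\<lambda>n. W (j + int n))" for j :: int
  have WOm: "W k \<in> Om" for k unfolding W_def using o(1) Om_Gn by auto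
  have WG: "G (W (k + 1)) = W k" for k
  proof (cases "0 \<le> k")
    case True
    then have "nat (k + 1) = Suc (nat k)" by simp
    then show ?thesis unfolding W_def using True o(2) by simp
  next
    case False
    have "W (k + 1) = (G ^^ (nat (-k) - 1)) (\<omega> 0)"
    proof (cases "k = -1")
      case True then show ?thesis unfolding W_def by simp
    next
      case False
      then have "\<not> 0 \<le> k + 1" "nat (- (k + 1)) = nat (-k) - 1" using \<open>\<not> 0 \<le> k\<close> by auto
      then show ?thesis unfolding W_def by simp
    qed
    moreover have "nat (-k) = Suc (nat (-k) - 1)" using False by simp
    ultimately have "G (W (k + 1)) = (G ^^ nat (-k)) (\<omega> 0)"
      by (metis comp_apply funpow.simps(2))
    then show ?thesis unfolding W_def using False by simp
  qed
  have VX: "V j \<in> Xs" for j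
    unfolding Xs_def V_def using WOm WG[of "j + int n" for n] by (auto simp: algebra_simps)
  have Vs: "shft (V j) = V (j + 1)" for j
    unfolding shft_def V_def by (auto simp: algebra_simps)
  have V0: "V 0 = \<omega>" unfolding V_def W_def by auto
  show ?thesis unfolding hLambda_def
  proof (rule CollectI, rule exI[of _ "\<lambda>j. Psi0 (V j)"], intro conjI allI)
    show "Psi0 (V 0) = Psi0 \<omega>" using V0 by simp
    fix k :: int
    show "Psi0 (V k) \<in> R0 \<union> R1" using key[OF VX[of k]] by simp
    show "Psi0 (V (k + 1)) = F (Psi0 (V k))" using key[OF VX[of k]] Vs[of k] by simp
  qed
qed

lemma Finv_Psi0: assumes "\<omega> \<in> Xs" shows "Finv (Psi0 \<omega>) = Psi0 (sig \<omega>)"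
proof -
  have "F (Psi0 (sig \<omega>)) = Psi0 \<omega>" using key[OF Xs_sig[OF assms]] shft_sig by simp
  then show ?thesis using Finv_F[OF Psi0_Lam[OF Xs_sig[OF assms]]] by simp
qed

lemma pr_Psi0: assumes "\<omega> \<in> Xs" shows "pr (Psi0 \<omega>) = \<omega> 0"
  using key[OF assms] by simp

lemma pr_surj: "pr ` Lam = Om"
proof
  show "pr ` Lam \<subseteq> Om" using pr_Om by auto
  show "Om \<subseteq> pr ` Lam"
  proof
    fix q assume q: "q \<in> Om"
    define \<omega> where "\<omega> n = (Pre ^^ n) q" for n
    have om: "\<omega> n \<in> Om" for n unfolding \<omega>_def by (induction n) (use q Pre_Om in auto)
    have "G (\<omega> (Suc n)) = \<omega> n" for n unfolding \<omega>_def using Pre_Om om[of n] \<omega>_def by simp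
    then have X: "\<omega> \<in> Xs" unfolding Xs_def using om by auto
    have "pr (Psi0 \<omega>) = q" using pr_Psi0[OF X] \<omega>_def by simp
    then show "q \<in> pr ` Lam" using Psi0_Lam[OF X] by blast
  qed
qed

end


lemma hg0_meas[measurable]: "hg0 \<in> borel_measurable borel"
  unfolding hg0_def by measurable

lemma hf_meas[measurable]: "hf \<in> borel_measurable borel"
  unfolding hf_def by measurable

lemma fst_meas: "(fst :: pt \<Rightarrow> real) \<in> borel_measurable borel"
  by (intro borel_measurable_continuous_onI continuous_intros)

lemma fstsnd_meas: "(\<lambda>p::pt. fst (snd p)) \<in> borel_measurable borel"
  by (intro borel_measurable_continuous_onI continuous_intros)

lemma sndsnd_meas: "(\<lambda>p::pt. snd (snd p)) \<in> borel_measurable borel"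
  by (intro borel_measurable_continuous_onI continuous_intros)

lemma funpow_meas: "T \<in> measurable M M \<Longrightarrow> T ^^ n \<in> measurable M M"
proof (induction n)
  case 0 then show ?case by (simp add: id_def)
next
  case (Suc n)
  then have "T \<circ> T ^^ n \<in> measurable M M" by (intro measurable_comp[where N=M]) auto
  then show ?case by (simp add: comp_def)
qed

lemma triple_meas:
  fixes f g h :: "'a \<Rightarrow> real"
  assumes "f \<in> borel_measurable M" "g \<in> borel_measurable M" "h \<in> borel_measurable M"
  shows "(\<lambda>x. (f x, g x, h x)) \<in> borel_measurable M"
  using assms by (intro borel_measurable_Pair) auto

context hs begin

lemma S_borel[measurable]: "S1 l0 \<in> sets borel" "S2 l0 s0 \<in> sets borel" "S3 l0 \<in> sets borel"
  "R0 \<in> sets borel" "R1 \<in> sets borel"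
  unfolding S1_def S2_def S3_def R0_def R1_def
  by (intro borel_closed closed_Times closed_atLeastAtMost closed_singleton)+

lemma G_eq: "G = (\<lambda>p. if p \<in> S1 l0 \<union> S3 l0 then (fst p / l0, hg0 (fst (snd p)), 0)
     else if p \<in> S2 l0 s0 then ((3/4 - fst p) / l0, 1 - fst (snd p) / s0, 5/6) else p)"
  unfolding hG_def hg1_def by (auto split: prod.splits)

lemma G_meas[measurable]: "G \<in> borel_measurable borel"
proof -
  have a: "(\<lambda>p::pt. (fst p / l0, hg0 (fst (snd p)), 0::real)) \<in> borel_measurable borel"
    by (intro triple_meas) (use fst_meas fstsnd_meas in measurable)
  have b: "(\<lambda>p::pt. ((3/4 - fst p) / l0, 1 - fst (snd p) / s0, 5/6::real)) \<in> borel_measurable borel"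
    by (intro triple_meas) (use fst_meas fstsnd_meas in measurable)
  show ?thesis unfolding G_eq using a b by measurable
qed

lemma Gn_meas[measurable]: "G ^^ n \<in> borel_measurable borel"
  by (rule funpow_meas) simp

lemma Om_borel[measurable]: "Om \<in> sets borel"
proof -
  have "Om = {p \<in> space borel. \<forall>n. (G ^^ n) p \<in> SS}" unfolding hOmega_def by simp
  also have "\<dots> \<in> sets borel" by measurable
  finally show ?thesis .
qed

lemma pr_meas[measurable]: "pr \<in> borel_measurable borel"
proof -
  have "(\<lambda>p::pt. (fst p, fst (snd p), if p \<in> R0 then 0 else 5/6::real)) \<in> borel_measurable borel"
    by (intro triple_meas) (use fst_meas fstsnd_meas in measurable)
  then show ?thesis unfolding pr_def[abs_def] .
qed

lemma lab_meas[measurable]: "Measurable.pred borel lab"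
  unfolding lab_def[abs_def] using sndsnd_meas by measurable

lemma cc_meas[measurable]: "cc \<in> borel_measurable borel"
  unfolding cc_def[abs_def] by measurable

lemma rr_meas[measurable]: "rr \<in> borel_measurable borel"
  unfolding rr_def[abs_def] by measurable

abbreviation "PS \<equiv> PiM (UNIV :: nat set) (\<lambda>_. borel :: pt measure)"

lemma Zs_meas[measurable]: "Zs \<in> borel_measurable PS"
  unfolding Zs_def[abs_def] trm_def by measurable

lemma Psi0_meas[measurable]: "Psi0 \<in> borel_measurable PS"
  unfolding Psi0_def[abs_def]
  by (intro triple_meas) (use fst_meas fstsnd_meas in measurable)

lemma Xs_meas[measurable]: "Xs \<in> sets PS"
proof -
  have "Xs = (\<Inter>n. {\<omega> \<in> space PS. \<omega> n \<in> Om} \<inter> {\<omega> \<in> space PS. G (\<omega> (Suc n)) = \<omega> n})"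
    unfolding Xs_def by (auto simp: space_PiM)
  also have "\<dots> \<in> sets PS"
  proof -
    have h: "{\<omega> \<in> space PS. \<omega> n \<in> Om} \<inter> {\<omega> \<in> space PS. G (\<omega> (Suc n)) = \<omega> n} \<in> sets PS" for n
    proof (rule sets.Int)
      show "{\<omega> \<in> space PS. \<omega> n \<in> Om} \<in> sets PS" by measurable
      show "{\<omega> \<in> space PS. G (\<omega> (Suc n)) = \<omega> n} \<in> sets PS"
        by (rule measurable_equality_set) measurable
    qed
    then show ?thesis by (intro sets.countable_INT) auto
  qed
  finally show ?thesis .
qed

lemma sig_meas[measurable]: "sig \<in> measurable PS PS"
  unfolding sig_def[abs_def] by measurable

end


locale hsm = hs +
  fixes \<mu> :: "pt measure"
  assumes prob: "prob_space \<mu>"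
    and sets_mu: "sets \<mu> = sets (restrict_space borel (hOmega l0 s0))"
    and inv: "invariant_measure \<mu> (hG l0 s0)"
begin

lemma space_mu: "space \<mu> = Om"
  using sets_eq_imp_space_eq[OF sets_mu] by (simp add: space_restrict_space)

lemma meas_mu: "f \<in> borel_measurable borel \<Longrightarrow> f \<in> borel_measurable \<mu>"
  using measurable_cong_sets[OF sets_mu refl] measurable_restrict_space1 by blast

lemma G_mu: "G \<in> measurable \<mu> \<mu>"
proof -
  have "G \<in> measurable (restrict_space borel Om) (restrict_space borel Om)"
    by (rule measurable_restrict_space3) (auto intro: Om_G)
  then show ?thesis using measurable_cong_sets[OF sets_mu sets_mu] by blast
qed

lemma Gn_mu: "G ^^ n \<in> measurable \<mu> \<mu>"
  by (rule funpow_meas[OF G_mu])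

lemma distr_G: "distr \<mu> \<mu> G = \<mu>"
proof (rule measure_eqI)
  fix A assume "A \<in> sets (distr \<mu> \<mu> G)"
  then have A: "A \<in> sets \<mu>" by simp
  show "emeasure (distr \<mu> \<mu> G) A = emeasure \<mu> A"
    using inv A unfolding invariant_measure_def by (simp add: emeasure_distr[OF G_mu A])
qed simp

lemma distr_Gn: "distr \<mu> \<mu> (G ^^ n) = \<mu>"
proof (induction n)
  case 0
  have "distr \<mu> \<mu> (\<lambda>x. x) = \<mu>" by (rule distr_id)
  then show ?case by (simp add: id_def)
next
  case (Suc n)
  have "distr \<mu> \<mu> (G ^^ Suc n) = distr \<mu> \<mu> (G ^^ n \<circ> G)" by (simp add: funpow_Suc_right del: funpow.simps)
  also have "\<dots> = distr (distr \<mu> \<mu> G) \<mu> (G ^^ n)" by (rule distr_distr[symmetric, OF Gn_mu G_mu])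
  also have "\<dots> = \<mu>" using Suc distr_G by simp
  finally show ?case .
qed

definition NJ :: "nat set \<Rightarrow> nat" where "NJ J = Max (insert 0 J)"

definition PJ :: "nat set \<Rightarrow> (nat \<Rightarrow> pt) measure" where
  "PJ J = distr \<mu> (PiM J (\<lambda>_. borel)) (\<lambda>q. \<lambda>j\<in>J. (G ^^ (NJ J - j)) q)"

lemma NJ_ge: "finite J \<Longrightarrow> j \<in> J \<Longrightarrow> j \<le> NJ J"
  unfolding NJ_def by (rule Max_ge) auto

lemma NJ_le: "finite J \<Longrightarrow> \<forall>j\<in>J. j \<le> N \<Longrightarrow> NJ J \<le> N"
  unfolding NJ_def by (subst Max_le_iff) auto

lemma vec_meas: "(\<lambda>q. \<lambda>j\<in>J. (G ^^ (N - j)) q) \<in> measurable \<mu> (PiM J (\<lambda>_. borel))"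
  by (rule measurable_restrict) (rule meas_mu[OF Gn_meas])

lemma PJ_N: assumes J: "finite J" and N: "\<forall>j\<in>J. j \<le> N"
  shows "distr \<mu> (PiM J (\<lambda>_. borel)) (\<lambda>q. \<lambda>j\<in>J. (G ^^ (N - j)) q) = PJ J"
proof -
  have le: "NJ J \<le> N" using NJ_le[OF J N] .
  have eq: "(\<lambda>q. \<lambda>j\<in>J. (G ^^ (N - j)) q) = (\<lambda>q. \<lambda>j\<in>J. (G ^^ (NJ J - j)) q) \<circ> (G ^^ (N - NJ J))"
  proof (rule ext)
    fix q
    show "(\<lambda>j\<in>J. (G ^^ (N - j)) q) = ((\<lambda>q. \<lambda>j\<in>J. (G ^^ (NJ J - j)) q) \<circ> (G ^^ (N - NJ J))) q"
    proof (rule ext)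
      fix j
      show "(\<lambda>j\<in>J. (G ^^ (N - j)) q) j = ((\<lambda>q. \<lambda>j\<in>J. (G ^^ (NJ J - j)) q) \<circ> (G ^^ (N - NJ J))) q j"
      proof (cases "j \<in> J")
        case True
        then have "N - j = (NJ J - j) + (N - NJ J)" using NJ_ge[OF J True] le by simp
        then show ?thesis using True by (simp add: funpow_add)
      qed simp
    qed
  qed
  have "distr \<mu> (PiM J (\<lambda>_. borel)) (\<lambda>q. \<lambda>j\<in>J. (G ^^ (N - j)) q)
      = distr (distr \<mu> \<mu> (G ^^ (N - NJ J))) (PiM J (\<lambda>_. borel)) (\<lambda>q. \<lambda>j\<in>J. (G ^^ (NJ J - j)) q)"
    unfolding eq by (rule distr_distr[symmetric, OF vec_meas Gn_mu])
  also have "\<dots> = PJ J" unfolding distr_Gn PJ_def ..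
  finally show ?thesis .
qed

lemma PJ_proj: "projective_family UNIV PJ (\<lambda>_. borel :: pt measure)"
  unfolding projective_family_def
proof (intro conjI allI impI)
  fix J :: "nat set" assume "finite J" "J \<subseteq> UNIV"
  show "prob_space (PJ J)" unfolding PJ_def by (rule prob_space.prob_space_distr[OF prob vec_meas])
next
  fix J H :: "nat set" assume JH: "J \<subseteq> H" "finite H" "H \<subseteq> UNIV"
  have J: "finite J" using JH finite_subset by blast
  have "distr (PJ H) (PiM J (\<lambda>_. borel)) (\<lambda>f. restrict f J)
     = distr \<mu> (PiM J (\<lambda>_. borel)) ((\<lambda>f. restrict f J) \<circ> (\<lambda>q. \<lambda>j\<in>H. (G ^^ (NJ H - j)) q))"
    unfolding PJ_def by (rule distr_distr[OF measurable_restrict_subset[OF JH(1)] vec_meas])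
  also have "(\<lambda>f. restrict f J) \<circ> (\<lambda>q. \<lambda>j\<in>H. (G ^^ (NJ H - j)) q) = (\<lambda>q. \<lambda>j\<in>J. (G ^^ (NJ H - j)) q)"
    using JH by (auto simp: fun_eq_iff restrict_def)
  also have "distr \<mu> (PiM J (\<lambda>_. borel)) (\<lambda>q. \<lambda>j\<in>J. (G ^^ (NJ H - j)) q) = PJ J"
    using J JH NJ_ge[OF JH(2)] by (intro PJ_N) auto
  finally show "PJ J = distr (PJ H) (PiM J (\<lambda>_. borel)) (\<lambda>f. restrict f J)" by (rule sym)
qed

end

sublocale hsm \<subseteq> PL: polish_projective "UNIV :: nat set" PJ
  unfolding polish_projective_def by (rule PJ_proj)

context hsm begin

lemma space_PS: "space PS = UNIV"
  by (simp add: space_PiM)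

lemma lim_cyl: assumes J: "finite J" and N: "\<forall>j\<in>J. j \<le> N" and X: "X \<in> sets (PiM J (\<lambda>_. borel))"
  shows "emeasure PL.lim {\<omega>. restrict \<omega> J \<in> X} = emeasure \<mu> {q \<in> Om. (\<lambda>j\<in>J. (G ^^ (N - j)) q) \<in> X}"
proof -
  have "{\<omega>. restrict \<omega> J \<in> X} = prod_emb UNIV (\<lambda>_. borel) J X"
    unfolding prod_emb_def by (auto simp: space_PiM)
  then have "emeasure PL.lim {\<omega>. restrict \<omega> J \<in> X} = emeasure (PJ J) X"
    using PL.emeasure_lim_emb[OF subset_UNIV J X] by simp
  also have "\<dots> = emeasure (distr \<mu> (PiM J (\<lambda>_. borel)) (\<lambda>q. \<lambda>j\<in>J. (G ^^ (N - j)) q)) X"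
    using PJ_N[OF J N] by simp
  also have "\<dots> = emeasure \<mu> ((\<lambda>q. \<lambda>j\<in>J. (G ^^ (N - j)) q) -` X \<inter> space \<mu>)"
    by (rule emeasure_distr[OF vec_meas X])
  also have "(\<lambda>q. \<lambda>j\<in>J. (G ^^ (N - j)) q) -` X \<inter> space \<mu> = {q \<in> Om. (\<lambda>j\<in>J. (G ^^ (N - j)) q) \<in> X}"
    using space_mu by auto
  finally show ?thesis .
qed

end


context hsm begin

lemma sets_lim': "sets PL.lim = sets PS" by simp

lemma meas_lim: "f \<in> measurable PS N \<Longrightarrow> f \<in> measurable PL.lim N"
  using measurable_cong_sets[OF sets_lim' refl] by blast

lemma space_lim: "space PL.lim = UNIV" by (simp add: space_PiM)

lemma AE_Xs: "AE \<omega> in PL.lim. \<omega> \<in> Xs"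
proof -
  have "AE \<omega> in PL.lim. \<omega> n \<in> Om \<and> G (\<omega> (Suc n)) = \<omega> n" for n
  proof -
    define J where "J = {n, Suc n}"
    define Y where "Y = space (PiM J (\<lambda>_. borel :: pt measure)) -
       ({f \<in> space (PiM J (\<lambda>_. borel :: pt measure)). f n \<in> Om} \<inter>
        {f \<in> space (PiM J (\<lambda>_. borel :: pt measure)). G (f (Suc n)) = f n})"
    have J: "finite J" "n \<in> J" "Suc n \<in> J" unfolding J_def by auto
    have c1: "(\<lambda>f. f n) \<in> measurable (PiM J (\<lambda>_. borel :: pt measure)) borel"
      by (rule measurable_component_singleton) (rule J)
    have c2: "(\<lambda>f. f (Suc n)) \<in> measurable (PiM J (\<lambda>_. borel :: pt measure)) borel"
      by (rule measurable_component_singleton) (rule J)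
    have Y: "Y \<in> sets (PiM J (\<lambda>_. borel))"
      unfolding Y_def
    proof (intro sets.Diff sets.top sets.Int)
      have "{f \<in> space (PiM J (\<lambda>_. borel :: pt measure)). f n \<in> Om} = (\<lambda>f. f n) -` Om \<inter> space (PiM J (\<lambda>_. borel))"
        by auto
      then show "{f \<in> space (PiM J (\<lambda>_. borel :: pt measure)). f n \<in> Om} \<in> sets (PiM J (\<lambda>_. borel))"
        using measurable_sets[OF c1 Om_borel] by simp
      show "{f \<in> space (PiM J (\<lambda>_. borel :: pt measure)). G (f (Suc n)) = f n} \<in> sets (PiM J (\<lambda>_. borel))"
        by (rule measurable_equality_set) (use c1 c2 in measurable)
    qed
    have e: "{\<omega> \<in> space PL.lim. \<not> (\<omega> n \<in> Om \<and> G (\<omega> (Suc n)) = \<omega> n)} = {\<omega>. restrict \<omega> J \<in> Y}"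
      unfolding Y_def using J by (auto simp: space_PiM space_lim)
    have "emeasure PL.lim {\<omega>. restrict \<omega> J \<in> Y} = emeasure \<mu> {q \<in> Om. (\<lambda>j\<in>J. (G ^^ (Suc n - j)) q) \<in> Y}"
      by (rule lim_cyl[OF J(1) _ Y]) (auto simp: J_def)
    also have "{q \<in> Om. (\<lambda>j\<in>J. (G ^^ (Suc n - j)) q) \<in> Y} = {}"
      unfolding Y_def using J Om_G by (auto simp: space_PiM)
    finally have "emeasure PL.lim {\<omega>. restrict \<omega> J \<in> Y} = emeasure \<mu> {}" .
    then have "emeasure PL.lim {\<omega>. restrict \<omega> J \<in> Y} = 0" by (simp only: emeasure_empty)
    moreover have "{\<omega>. restrict \<omega> J \<in> Y} \<in> sets PL.lim"
    proof -
      have "(\<lambda>\<omega>. restrict \<omega> J) \<in> measurable PL.lim (PiM J (\<lambda>_. borel))"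
        by (rule meas_lim, rule measurable_restrict_subset) simp
      from measurable_sets[OF this Y] show ?thesis by (simp add: space_lim space_PS vimage_def)
    qed
    ultimately show ?thesis using AE_iff_measurable[OF _ e] by simp
  qed
  then have "AE \<omega> in PL.lim. \<forall>n. \<omega> n \<in> Om \<and> G (\<omega> (Suc n)) = \<omega> n" by (simp add: AE_all_countable)
  then show ?thesis unfolding Xs_def by simp
qed

end


context hsm begin

lemma sig_alt: "sig \<omega> j = (if j = 0 then G (\<omega> 0) else \<omega> (j - 1))"
  unfolding sig_def by (cases j) auto

lemma sig_inv: "distr PL.lim PS sig = PL.lim"
proof (rule measure_eqI_PiM_infinite[where I=UNIV and M="\<lambda>_. borel"])
  show "sets (distr PL.lim PS sig) = sets PS" by simp
  show "sets PL.lim = sets PS" by simp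
  show "finite_measure (distr PL.lim PS sig)"
    by (rule prob_space.finite_measure, rule prob_space.prob_space_distr[OF PL.P.prob_space_axioms])
       (rule meas_lim[OF sig_meas])
next
  fix A :: "nat \<Rightarrow> pt set" and J :: "nat set"
  assume J: "finite J" "J \<subseteq> UNIV" and A: "\<And>i. i \<in> J \<Longrightarrow> A i \<in> sets borel"
  define N where "N = NJ J"
  have jN: "\<forall>j\<in>J. j \<le> N" unfolding N_def using NJ_ge[OF J(1)] by auto
  define C where "C = prod_emb UNIV (\<lambda>_. borel :: pt measure) J (PiE J A)"
  have C: "C = {\<omega>. restrict \<omega> J \<in> PiE J A}" unfolding C_def prod_emb_def by (auto simp: space_PiM)
  have PA: "PiE J A \<in> sets (PiM J (\<lambda>_. borel :: pt measure))" by (rule sets_PiM_I_finite[OF J(1) A])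
  define B where "B = {q \<in> Om. (\<lambda>j\<in>J. (G ^^ (N - j)) q) \<in> PiE J A}"
  have lC: "emeasure PL.lim C = emeasure \<mu> B" unfolding C B_def by (rule lim_cyl[OF J(1) jN PA])
  have Bs: "B \<in> sets \<mu>"
  proof -
    have "B = (\<lambda>q. \<lambda>j\<in>J. (G ^^ (N - j)) q) -` PiE J A \<inter> space \<mu>" unfolding B_def space_mu by auto
    then show ?thesis using measurable_sets[OF vec_meas PA] by simp
  qed
  define h where "h f = (\<lambda>j\<in>J. if j = 0 then G (f 0) else f (j - 1))" for f :: "nat \<Rightarrow> pt"
  have hm: "h \<in> measurable (PiM {0..N} (\<lambda>_. borel)) (PiM J (\<lambda>_. borel))"
    unfolding h_def
  proof (rule measurable_restrict)
    fix j assume j: "j \<in> J"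
    have c0: "(\<lambda>f. f 0) \<in> measurable (PiM {0..N} (\<lambda>_. borel :: pt measure)) borel"
      by (rule measurable_component_singleton) simp
    have cj: "(\<lambda>f. f (j - 1)) \<in> measurable (PiM {0..N} (\<lambda>_. borel :: pt measure)) borel"
      by (rule measurable_component_singleton) (use jN j in auto)
    show "(\<lambda>f. if j = 0 then G (f 0) else f (j - 1)) \<in> measurable (PiM {0..N} (\<lambda>_. borel)) borel"
      using c0 cj by (cases "j = 0") (simp_all add: measurable_comp[OF c0 G_meas, unfolded comp_def])
  qed
  define Y2 where "Y2 = h -` PiE J A \<inter> space (PiM {0..N} (\<lambda>_. borel :: pt measure))"
  have Y2: "Y2 \<in> sets (PiM {0..N} (\<lambda>_. borel))" unfolding Y2_def by (rule measurable_sets[OF hm PA])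
  have hr: "h (restrict \<omega> {0..N}) = restrict (sig \<omega>) J" for \<omega>
    unfolding h_def using jN by (auto simp: fun_eq_iff sig_alt)
  have sC: "sig -` C \<inter> space PL.lim = {\<omega>. restrict \<omega> {0..N} \<in> Y2}"
    unfolding C Y2_def using hr by (auto simp: space_lim space_PiM)
  have "emeasure (distr PL.lim PS sig) C = emeasure PL.lim (sig -` C \<inter> space PL.lim)"
  proof (rule emeasure_distr[OF meas_lim[OF sig_meas]])
    show "C \<in> sets PS" unfolding C_def by (rule sets_PiM_I) (use J A in auto)
  qed
  also have "\<dots> = emeasure \<mu> {q \<in> Om. (\<lambda>j\<in>{0..N}. (G ^^ (N - j)) q) \<in> Y2}"
    unfolding sC by (rule lim_cyl) (use Y2 in auto)
  also have "{q \<in> Om. (\<lambda>j\<in>{0..N}. (G ^^ (N - j)) q) \<in> Y2} = G -` B \<inter> space \<mu>"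
  proof -
    have hq: "h (\<lambda>j\<in>{0..N}. (G ^^ (N - j)) q) = (\<lambda>j\<in>J. (G ^^ (N - j)) (G q))" for q
    proof -
      have st: "(if j = 0 then G ((G ^^ N) q) else (G ^^ (N - (j - 1))) q) = (G ^^ (N - j)) (G q)" if "j \<in> J" for j
      proof (cases "j = 0")
        case True then show ?thesis by (simp add: funpow_swap1)
      next
        case False
        then have "N - (j - 1) = Suc (N - j)" using jN that by auto
        then show ?thesis using False by (simp add: funpow_Suc_right del: funpow.simps)
      qed
      have "h (\<lambda>j\<in>{0..N}. (G ^^ (N - j)) q) = (\<lambda>j\<in>J. if j = 0 then G ((G ^^ N) q) else (G ^^ (N - (j - 1))) q)"
        unfolding h_def using jN by (intro restrict_ext) auto
      also have "\<dots> = (\<lambda>j\<in>J. (G ^^ (N - j)) (G q))" using st by (intro restrict_ext) simp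
      finally show ?thesis .
    qed
    show ?thesis unfolding Y2_def B_def space_mu using hq Om_G by (auto simp: space_PiM)
  qed
  also have "emeasure \<mu> (G -` B \<inter> space \<mu>) = emeasure \<mu> B"
    using inv Bs unfolding invariant_measure_def by simp
  finally show "emeasure (distr PL.lim PS sig) C = emeasure PL.lim C" using lC by simp
qed

end


context hs begin

definition Finv' :: "pt \<Rightarrow> pt" where
  "Finv' p = (if fst p \<le> l0 then (fst p / l0, hg0 (fst (snd p)), snd (snd p) / b0)
     else ((3/4 - fst p) / l0, 1 - fst (snd p) / s0, snd (snd p) / b1 + 5/6))"

lemma Finv_eq: assumes "p \<in> Lam" shows "Finv p = Finv' p"
proof -
  define q where "q = Finv p"
  have qL: "q \<in> Lam" and Fq: "F q = p" using Finv_Lam[OF assms] q_def by auto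
  obtain x y z where qq: "q = (x,y,z)" by (cases q) auto
  have qR: "q \<in> R0 \<union> R1" using Lam_R[OF qL] .
  have hx: "0 \<le> x" "x \<le> 1" "0 \<le> y" "y \<le> 1" using qR unfolding qq R0_def R1_def by auto
  have lx: "l0 * x \<le> l0" "0 \<le> l0 * x" using hx l0 by (simp_all add: mult_left_le)
  show ?thesis
  proof (cases "q \<in> R0")
    case True
    then have p: "p = (l0 * x, hf y, b0 * z)" using Fq F_R0 qq by simp
    have "Finv' p = (l0 * x / l0, hg0 (hf y), b0 * z / b0)" unfolding Finv'_def p using lx by simp
    also have "\<dots> = q" using l0 b0 hg0_hf[OF hx(3,4)] qq by simp
    finally show ?thesis using q_def by simp
  next
    case False
    then have q1: "q \<in> R1" using qR by auto
    then have p: "p = (3/4 - l0 * x, s0 * (1 - y), b1 * (z - 5/6))" using Fq F_R1 qq by simp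
    have "\<not> 3/4 - l0 * x \<le> l0" using lx l0 by linarith
    then have "Finv' p = ((3/4 - (3/4 - l0 * x)) / l0, 1 - s0 * (1 - y) / s0, b1 * (z - 5/6) / b1 + 5/6)"
      unfolding Finv'_def p by simp
    also have "\<dots> = q" using l0 s0 b1 qq by simp
    finally show ?thesis using q_def by simp
  qed
qed

lemma Finv'_meas: "Finv' \<in> borel_measurable borel"
proof -
  have a: "(\<lambda>p::pt. (fst p / l0, hg0 (fst (snd p)), snd (snd p) / b0)) \<in> borel_measurable borel"
    by (intro triple_meas) (use fst_meas fstsnd_meas sndsnd_meas in measurable)
  have b: "(\<lambda>p::pt. ((3/4 - fst p) / l0, 1 - fst (snd p) / s0, snd (snd p) / b1 + 5/6)) \<in> borel_measurable borel"
    by (intro triple_meas) (use fst_meas fstsnd_meas sndsnd_meas in measurable)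
  have c: "{p \<in> space borel. fst (p::pt) \<le> l0} \<in> sets borel"
    using fst_meas by measurable
  show ?thesis unfolding Finv'_def[abs_def] by (rule measurable_If[OF a b c])
qed

lemma zero_Lam: "(0, 0, 0) \<in> Lam"
proof -
  have R: "(0::real, 0::real, 0::real) \<in> R0" unfolding R0_def by auto
  have "F (0, 0, 0) = (0, 0, 0)" using F_R0[OF R] by (simp add: hf_def)
  then show ?thesis unfolding hLambda_def using R
    by (intro CollectI exI[of _ "\<lambda>_. (0, 0, 0)"]) auto
qed

end

context hsm begin

definition Psi :: "(nat \<Rightarrow> pt) \<Rightarrow> pt" where
  "Psi \<omega> = (if \<omega> \<in> Xs then Psi0 \<omega> else (0, 0, 0))"

lemma Psi_Lam: "Psi \<omega> \<in> Lam"
  unfolding Psi_def using Psi0_Lam zero_Lam by auto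

lemma Psi_PS: "Psi \<in> measurable PS (restrict_space borel Lam)"
proof (rule measurable_restrict_space2)
  show "Psi \<in> space PS \<rightarrow> Lam" using Psi_Lam by auto
  show "Psi \<in> borel_measurable PS" unfolding Psi_def[abs_def] by measurable
qed

lemma Psi_meas: "Psi \<in> measurable PL.lim (restrict_space borel Lam)"
  by (rule meas_lim[OF Psi_PS])

definition \<nu> :: "pt measure" where "\<nu> = distr PL.lim (restrict_space borel Lam) Psi"

lemma sets_nu: "sets \<nu> = sets (restrict_space borel Lam)" unfolding \<nu>_def by simp

lemma space_nu: "space \<nu> = Lam" unfolding \<nu>_def by (simp add: space_restrict_space)

lemma prob_nu: "prob_space \<nu>"
  unfolding \<nu>_def by (rule prob_space.prob_space_distr[OF PL.P.prob_space_axioms Psi_meas])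

lemma nu_emeasure: "A \<in> sets \<nu> \<Longrightarrow> emeasure \<nu> A = emeasure PL.lim {\<omega>. Psi \<omega> \<in> A}"
  unfolding \<nu>_def by (subst emeasure_distr[OF Psi_meas]) (auto simp: space_lim space_PS vimage_def)

lemma Finv'_nu: "Finv' \<in> measurable \<nu> \<nu>"
proof -
  have "Finv' \<in> measurable (restrict_space borel Lam) (restrict_space borel Lam)"
    by (rule measurable_restrict_space3[OF Finv'_meas]) (use Finv_eq Finv_Lam in auto)
  then show ?thesis using measurable_cong_sets[OF sets_nu sets_nu] by blast
qed

lemma inv_nu: "invariant_measure \<nu> Finv"
  unfolding invariant_measure_def
proof
  fix A assume A: "A \<in> sets \<nu>"
  have e1: "Finv -` A \<inter> space \<nu> = Finv' -` A \<inter> space \<nu>" using Finv_eq space_nu by auto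
  have A1: "Finv' -` A \<inter> space \<nu> \<in> sets \<nu>" by (rule measurable_sets[OF Finv'_nu A])
  have "emeasure \<nu> (Finv -` A \<inter> space \<nu>) = emeasure PL.lim {\<omega>. Psi \<omega> \<in> Finv' -` A \<inter> space \<nu>}"
    unfolding e1 by (rule nu_emeasure[OF A1])
  also have "\<dots> = emeasure PL.lim {\<omega>. Psi (sig \<omega>) \<in> A}"
  proof (rule emeasure_eq_AE)
    show "AE \<omega> in PL.lim. (\<omega> \<in> {\<omega>. Psi \<omega> \<in> Finv' -` A \<inter> space \<nu>}) = (\<omega> \<in> {\<omega>. Psi (sig \<omega>) \<in> A})"
      using AE_Xs
    proof eventually_elim
      case (elim \<omega>)
      have "Finv' (Psi \<omega>) = Finv (Psi \<omega>)" using Finv_eq Psi_Lam by simp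
      also have "\<dots> = Psi (sig \<omega>)" using elim Finv_Psi0 Xs_sig unfolding Psi_def by simp
      finally show ?case using Psi_Lam space_nu by simp
    qed
    have "Psi -` (Finv' -` A \<inter> space \<nu>) \<inter> space PL.lim \<in> sets PL.lim"
      using measurable_sets[OF Psi_meas A1[unfolded sets_nu]] by simp
    then show "{\<omega>. Psi \<omega> \<in> Finv' -` A \<inter> space \<nu>} \<in> sets PL.lim" by (simp add: space_lim space_PS vimage_def)
    have "(Psi \<circ> sig) -` A \<inter> space PL.lim \<in> sets PL.lim"
      using measurable_sets[OF meas_lim[OF measurable_comp[OF sig_meas Psi_PS]] A[unfolded sets_nu]] by simp
    then show "{\<omega>. Psi (sig \<omega>) \<in> A} \<in> sets PL.lim" by (simp add: space_lim space_PS vimage_def)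
  qed
  also have "\<dots> = emeasure (distr PL.lim PS sig) {\<omega>. Psi \<omega> \<in> A}"
  proof -
    have "{\<omega>. Psi \<omega> \<in> A} = Psi -` A \<inter> space PS" by (auto simp: space_PS)
    then have s: "{\<omega>. Psi \<omega> \<in> A} \<in> sets PS" using measurable_sets[OF Psi_PS A[unfolded sets_nu]] by simp
    show ?thesis by (subst emeasure_distr[OF meas_lim[OF sig_meas] s]) (simp add: space_lim space_PS vimage_def)
  qed
  also have "\<dots> = emeasure PL.lim {\<omega>. Psi \<omega> \<in> A}" unfolding sig_inv ..
  also have "\<dots> = emeasure \<nu> A" by (rule nu_emeasure[OF A, symmetric])
  finally show "emeasure \<nu> (Finv -` A \<inter> space \<nu>) = emeasure \<nu> A" .
qed

lemma pr_nu: "pr \<in> measurable \<nu> \<mu>"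
proof -
  have "pr \<in> measurable (restrict_space borel Lam) (restrict_space borel Om)"
    by (rule measurable_restrict_space3[OF pr_meas]) (use pr_Om in auto)
  then show ?thesis using measurable_cong_sets[OF sets_nu sets_mu] by blast
qed

lemma meq: assumes A: "A \<in> sets \<mu>" shows "measure \<nu> (pr -` A \<inter> space \<nu>) = measure \<mu> A"
proof -
  have "A \<in> sets (restrict_space borel Om)" using A sets_mu by simp
  then have "A \<subseteq> Om \<and> A \<in> sets borel" using sets_restrict_space_iff[of Om borel A] Om_borel by simp
  then have Ab: "A \<in> sets borel" and AO: "A \<subseteq> Om" by auto
  have A1: "pr -` A \<inter> space \<nu> \<in> sets \<nu>" by (rule measurable_sets[OF pr_nu A])
  have "emeasure \<nu> (pr -` A \<inter> space \<nu>) = emeasure PL.lim {\<omega>. Psi \<omega> \<in> pr -` A \<inter> space \<nu>}"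
    by (rule nu_emeasure[OF A1])
  also have "\<dots> = emeasure PL.lim {\<omega>. restrict \<omega> {0} \<in> {f \<in> space (PiM {0} (\<lambda>_. borel :: pt measure)). f 0 \<in> A}}"
  proof (rule emeasure_eq_AE)
    show "AE \<omega> in PL.lim. (\<omega> \<in> {\<omega>. Psi \<omega> \<in> pr -` A \<inter> space \<nu>}) =
        (\<omega> \<in> {\<omega>. restrict \<omega> {0} \<in> {f \<in> space (PiM {0} (\<lambda>_. borel :: pt measure)). f 0 \<in> A}})"
      using AE_Xs
    proof eventually_elim
      case (elim \<omega>)
      have "pr (Psi \<omega>) = \<omega> 0" using elim pr_Psi0 unfolding Psi_def by simp
      then show ?case using Psi_Lam space_nu by (simp add: space_PiM)
    qed
    have "Psi -` (pr -` A \<inter> space \<nu>) \<inter> space PL.lim \<in> sets PL.lim"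
      using measurable_sets[OF Psi_meas A1[unfolded sets_nu]] by simp
    then show "{\<omega>. Psi \<omega> \<in> pr -` A \<inter> space \<nu>} \<in> sets PL.lim" by (simp add: space_lim space_PS vimage_def)
    have "(\<lambda>\<omega>. \<omega> 0) -` A \<inter> space PL.lim \<in> sets PL.lim"
      by (rule measurable_sets[OF meas_lim[OF measurable_component_singleton[of 0 UNIV "\<lambda>_. borel :: pt measure"]] Ab]) simp
    then show "{\<omega>. restrict \<omega> {0} \<in> {f \<in> space (PiM {0} (\<lambda>_. borel :: pt measure)). f 0 \<in> A}} \<in> sets PL.lim"
      by (simp add: space_lim space_PS vimage_def space_PiM)
  qed
  also have "\<dots> = emeasure \<mu> {q \<in> Om. (\<lambda>j\<in>{0}. (G ^^ (0 - j)) q) \<in> {f \<in> space (PiM {0} (\<lambda>_. borel :: pt measure)). f 0 \<in> A}}"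
  proof (rule lim_cyl)
    have e: "{f \<in> space (PiM {0} (\<lambda>_. borel :: pt measure)). f 0 \<in> A} = (\<lambda>f. f 0) -` A \<inter> space (PiM {0} (\<lambda>_. borel :: pt measure))"
      by auto
    show "{f \<in> space (PiM {0} (\<lambda>_. borel :: pt measure)). f 0 \<in> A} \<in> sets (PiM {0} (\<lambda>_. borel))"
      unfolding e by (rule measurable_sets[OF measurable_component_singleton[of 0 "{0}" "\<lambda>_. borel :: pt measure"] Ab]) simp
  qed auto
  also have "{q \<in> Om. (\<lambda>j\<in>{0}. (G ^^ (0 - j)) q) \<in> {f \<in> space (PiM {0} (\<lambda>_. borel :: pt measure)). f 0 \<in> A}} = A"
    using AO by (auto simp: space_PiM)
  finally show ?thesis unfolding measure_def by simp
qed

lemma main: "\<exists>\<nu> :: pt measure. prob_space \<nu>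
           \<and> sets \<nu> = sets (restrict_space borel (hLambda l0 b0 s0 b1))
           \<and> invariant_measure \<nu> (hFinv l0 b0 s0 b1)
           \<and> ks_entropy \<nu> (hFinv l0 b0 s0 b1) \<ge> ks_entropy \<mu> (hG l0 s0)"
proof (rule exI[of _ \<nu>], intro conjI)
  show "prob_space \<nu>" by (rule prob_nu)
  show "sets \<nu> = sets (restrict_space borel Lam)" by (rule sets_nu)
  show "invariant_measure \<nu> Finv" by (rule inv_nu)
  show "ks_entropy \<mu> G \<le> ks_entropy \<nu> Finv"
  proof (rule factor_entropy[OF _ pr_nu _ _ meq G_mu])
    show "pr ` space \<nu> = space \<mu>" using pr_surj space_nu space_mu by simp
    show "\<And>p. p \<in> space \<nu> \<Longrightarrow> Finv p \<in> space \<nu>" using Finv_Lam space_nu by auto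
    show "\<And>p. p \<in> space \<nu> \<Longrightarrow> pr (Finv p) = G (pr p)" using pr_step space_nu by auto
  qed
qed

end

theorem theorem5p1:
  fixes l0 b0 s0 b1 :: real and \<mu> :: "pt measure"
  assumes "0 < l0" "l0 < 1/3" "b0 > 6" "0 < s0" "s0 < 1/3" "3 < b1" "b1 < 4"
    and "prob_space \<mu>"
    and "sets \<mu> = sets (restrict_space borel (hOmega l0 s0))"
    and "invariant_measure \<mu> (hG l0 s0)"
  shows "\<exists>\<nu> :: pt measure. prob_space \<nu>
           \<and> sets \<nu> = sets (restrict_space borel (hLambda l0 b0 s0 b1))
           \<and> invariant_measure \<nu> (hFinv l0 b0 s0 b1)
           \<and> ks_entropy \<nu> (hFinv l0 b0 s0 b1) \<ge> ks_entropy \<mu> (hG l0 s0)"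
proof -
  interpret hsm l0 b0 s0 b1 \<mu>
    by (intro hsm.intro hs.intro hsm_axioms.intro assms)
  show ?thesis by (rule main)
qed


end
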